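(* Let $q$ be a prime power, $G=\mathrm{PGL}_3(q)$ acting on the point set $\mathcal{P}$ of $\mathrm{PG}_2(q)$, and let $A$ be the $\{0,1\}$-matrix with rows indexed by $G$ and columns indexed by ordered pairs $(\alpha,\beta)\in\mathcal{P}^2$, with $A_{g,(\alpha,\beta)}=1$ iff $\alpha^g=\beta$. Then $A$ has rank $(|\mathcal{P}|-1)^2+1$. Moreover, for any fixed $\bar\alpha\in\mathcal{P}$, the right kernel of $A$ (viewed as a linear map $V\to\mathbb{C}^G$) equals the subspace $$\langle e^1_{\bar\alpha}-e^1_\alpha,\ e^2_{\bar\alpha}-e^2_\alpha \mid \alpha\in\mathcal{P}\rangle$$ of $V$.
   Context: Points of $\mathrm{PG}_2(q)$ are the $1$-dimensional subspaces of $\mathrm{GF}(q)^3$, so $|\mathcal{P}|=q^2+q+1$. $V$ is the complex vector space with basis $\{e_{\alpha\beta}:(\alpha,\beta)\in\mathcal{P}^2\}$, identified with the column index set of $A$. For $\alpha\in\mathcal{P}$: $e^1_\alpha=\sum_{\beta\in\mathcal{P}}e_{\alpha\beta}$ and $e^2_\alpha=\sum_{\beta\in\mathcal{P}}e_{\beta\alpha}$. *)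

theory Defs
  imports "HOL-Analysis.Analysis" "HOL-Library.Function_Algebras"
begin

definition pg_lines :: "('a::field ^ 3) set set" where
  "pg_lines = {L. \<exists>v. v \<noteq> 0 \<and> L = {c *s v | c. True}}"

typedef (overloaded) ('a::field) ppoint = "pg_lines :: ('a ^ 3) set set"
proof
  show "{c *s (axis 1 (1::'a)) | c. True} \<in> pg_lines"
    unfolding pg_lines_def by (rule CollectI, rule exI[of _ "axis 1 1"]) (simp add: axis_eq_0_iff)
qed

instance ppoint :: ("{finite,field}") finite
proof
  have "finite (pg_lines :: ('a ^ 3) set set)" by (rule finite_subset[of _ UNIV]) simp_all
  then show "finite (UNIV :: 'a ppoint set)"
    by (subst type_definition.univ[OF type_definition_ppoint]) (rule finite_imageI)
qed

definition PGL3 :: "('a::field ^ 3 ^ 3) set set" where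
  "PGL3 = {M. invertible M} // {(M, N). invertible M \<and> invertible N \<and>
              (\<exists>c. c \<noteq> 0 \<and> N = (\<chi> i j. c * M $ i $ j))}"

text \<open>Right action of an invertible matrix on points (row vectors), and of a PGL class
  (via any representative; the result does not depend on the choice).\<close>

definition act_mat :: "'a::field ^ 3 ^ 3 \<Rightarrow> 'a ppoint \<Rightarrow> 'a ppoint" where
  "act_mat M \<alpha> = Abs_ppoint ((\<lambda>v. v v* M) ` Rep_ppoint \<alpha>)"

definition act :: "('a::field ^ 3 ^ 3) set \<Rightarrow> 'a ppoint \<Rightarrow> 'a ppoint" where
  "act g \<alpha> = act_mat (SOME M. M \<in> g) \<alpha>"

definition Amat :: "('a::field ^ 3 ^ 3) set \<Rightarrow> 'a ppoint \<times> 'a ppoint \<Rightarrow> complex" where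
  "Amat g p = (if act g (fst p) = snd p then 1 else 0)"

text \<open>V = functions on pairs of points (basis e_{\<alpha>\<beta>} = indicator of (\<alpha>,\<beta>)), as a complex vector space.\<close>

abbreviation fscale :: "complex \<Rightarrow> ('b \<Rightarrow> complex) \<Rightarrow> ('b \<Rightarrow> complex)" where
  "fscale c f \<equiv> (\<lambda>x. c * f x)"

abbreviation cspanV :: "(('b \<Rightarrow> complex)) set \<Rightarrow> ('b \<Rightarrow> complex) set" where
  "cspanV \<equiv> Modules.module.span fscale"

abbreviation cdimV :: "(('b \<Rightarrow> complex)) set \<Rightarrow> nat" where
  "cdimV \<equiv> Vector_Spaces.vector_space.dim fscale"

definition A_rank :: "'a::{finite,field} itself \<Rightarrow> nat" where
  "A_rank _ = cdimV {Amat g | g :: ('a ^ 3 ^ 3) set. g \<in> PGL3}"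

definition A_kernel :: "'a::{finite,field} itself \<Rightarrow> ('a ppoint \<times> 'a ppoint \<Rightarrow> complex) set" where
  "A_kernel _ = {x. \<forall>g\<in>(PGL3 :: ('a ^ 3 ^ 3) set set). (\<Sum>p\<in>UNIV. Amat g p * x p) = 0}"

definition e1 :: "'a::field ppoint \<Rightarrow> ('a ppoint \<times> 'a ppoint \<Rightarrow> complex)" where
  "e1 \<alpha> = (\<lambda>(\<gamma>, \<delta>). if \<gamma> = \<alpha> then 1 else 0)"

definition e2 :: "'a::field ppoint \<Rightarrow> ('a ppoint \<times> 'a ppoint \<Rightarrow> complex)" where
  "e2 \<alpha> = (\<lambda>(\<gamma>, \<delta>). if \<delta> = \<alpha> then 1 else 0)"

end

theory Submission
  imports Defs
begin


definition line :: "'a::field ^ 3 \<Rightarrow> ('a ^ 3) set" where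
  "line v = {c *s v | c. True}"

definition pt :: "'a::field ^ 3 \<Rightarrow> 'a ppoint" where
  "pt v = Abs_ppoint (line v)"

definition pv :: "'a::field ppoint \<Rightarrow> 'a ^ 3" where
  "pv \<alpha> = (SOME v. v \<noteq> 0 \<and> Rep_ppoint \<alpha> = line v)"

lemma line_in: "v \<noteq> 0 \<Longrightarrow> line v \<in> pg_lines"
  unfolding pg_lines_def line_def by auto


lemma pv_prop: "pv \<alpha> \<noteq> 0 \<and> Rep_ppoint \<alpha> = line (pv \<alpha>)"
proof -
  have "Rep_ppoint \<alpha> \<in> pg_lines" by (rule Rep_ppoint)
  then obtain v where "v \<noteq> 0" "Rep_ppoint \<alpha> = line v" unfolding pg_lines_def line_def by auto
  then show ?thesis unfolding pv_def by (rule someI[where P="\<lambda>v. v \<noteq> 0 \<and> Rep_ppoint \<alpha> = line v", OF conjI])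
qed

lemma pv_nz: "pv \<alpha> \<noteq> 0" using pv_prop by blast

lemma pt_pv[simp]: "pt (pv \<alpha>) = \<alpha>"
  unfolding pt_def using pv_prop[of \<alpha>] by (metis Rep_ppoint_inverse)

lemma line_eq:
  fixes u v :: "'a::field ^ 3"
  assumes "u \<noteq> 0" "v \<noteq> 0"
  shows "line u = line v \<longleftrightarrow> (\<exists>k. u = k *s v)"
proof
  assume "line u = line v"
  moreover have "u \<in> line u" unfolding line_def by (auto intro: exI[of _ 1])
  ultimately show "\<exists>k. u = k *s v" unfolding line_def by auto
next
  assume "\<exists>k. u = k *s v"
  then obtain k where k: "u = k *s v" by blast
  with assms have k0: "k \<noteq> 0" by auto
  show "line u = line v"
  proof
    show "line u \<subseteq> line v" unfolding line_def k by (auto simp: vector_smult_assoc)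
    show "line v \<subseteq> line u"
    proof
      fix x assume "x \<in> line v"
      then obtain c where "x = c *s v" by (auto simp: line_def)
      then have "x = (c / k) *s u" using k0 k by (simp add: vector_smult_assoc)
      then show "x \<in> line u" by (auto simp: line_def)
    qed
  qed
qed

lemma pt_eq:
  fixes u v :: "'a::field ^ 3"
  assumes "u \<noteq> 0" "v \<noteq> 0"
  shows "pt u = pt v \<longleftrightarrow> (\<exists>k. u = k *s v)"
  unfolding pt_def using assms line_eq[OF assms]
  by (simp add: Abs_ppoint_inject line_in)

lemma Rep_pt: "v \<noteq> 0 \<Longrightarrow> Rep_ppoint (pt v) = line v"
  unfolding pt_def by (simp add: Abs_ppoint_inverse line_in)

lemma vm_nz:
  fixes M :: "'a::field^3^3"
  assumes "invertible M" "v \<noteq> 0"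
  shows "v v* M \<noteq> 0"
proof
  assume h: "v v* M = 0"
  obtain M' where "M ** M' = mat 1" using assms(1) unfolding invertible_def by blast
  then have "v = (v v* M) v* M'" by (simp add: vector_matrix_mul_assoc)
  with h assms(2) show False by simp
qed

lemma act_mat_pt:
  fixes M :: "'a::field^3^3"
  assumes "invertible M" "v \<noteq> 0"
  shows "act_mat M (pt v) = pt (v v* M)"
proof -
  have "(\<lambda>w. w v* M) ` line v = line (v v* M)"
    unfolding line_def by (auto simp: scalar_vector_matrix_assoc intro!: rev_image_eqI)
  then show ?thesis unfolding act_mat_def using assms Rep_pt[OF assms(2)] by (simp add: pt_def)
qed

lemma act_mat_pv:
  fixes M :: "'a::{field}^3^3"
  assumes "invertible M"
  shows "act_mat M \<alpha> = pt (pv \<alpha> v* M)"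
  using act_mat_pt[OF assms pv_nz, of \<alpha>] by simp

lemma act_mat_mult:
  fixes M N :: "'a::{field}^3^3"
  assumes "invertible M" "invertible N"
  shows "act_mat (M ** N) \<alpha> = act_mat N (act_mat M \<alpha>)"
proof -
  have "act_mat M \<alpha> = pt (pv \<alpha> v* M)" by (rule act_mat_pv[OF assms(1)])
  moreover have "act_mat N (pt (pv \<alpha> v* M)) = pt ((pv \<alpha> v* M) v* N)"
    by (rule act_mat_pt[OF assms(2) vm_nz[OF assms(1) pv_nz]])
  moreover have "act_mat (M ** N) \<alpha> = pt (pv \<alpha> v* (M ** N))"
    by (rule act_mat_pv[OF invertible_mult[OF assms]])
  ultimately show ?thesis by (simp add: vector_matrix_mul_assoc)
qed

lemma invertible_mat1: "invertible (mat 1 :: 'a::field^'n^'n)"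
  unfolding invertible_def by (rule exI[of _ "mat 1"]) simp

lemma act_mat_1[simp]: "act_mat (mat 1 :: 'a::field^3^3) \<alpha> = \<alpha>"
  using act_mat_pv[OF invertible_mat1, of \<alpha>] by simp

lemma act_mat_inv:
  fixes M M' :: "'a::{field}^3^3"
  assumes "M ** M' = mat 1"
  shows "act_mat M' (act_mat M \<alpha>) = \<alpha>"
proof -
  have iM: "invertible M" using assms invertible_right_inverse by blast
  have iM': "invertible M'" using assms invertible_left_inverse by blast
  show ?thesis using act_mat_mult[OF iM iM', of \<alpha>] assms by simp
qed

definition sc :: "'a::field \<Rightarrow> 'a^3^3 \<Rightarrow> 'a^3^3" where
  "sc c M = (\<chi> i j. c * M $ i $ j)"

lemma vm_sc: "v v* sc c M = c *s (v v* M)"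
  by (simp add: sc_def vector_matrix_mult_def vec_eq_iff sum_distrib_left mult_ac)

lemma sc_mult_left: "sc c A ** B = sc c (A ** B)"
  by (simp add: sc_def matrix_matrix_mult_def vec_eq_iff sum_distrib_left mult_ac)

lemma sc_mult_right: "A ** sc c B = sc c (A ** B)"
  by (simp add: sc_def matrix_matrix_mult_def vec_eq_iff sum_distrib_left mult_ac)

lemma sc_sc: "sc c (sc d A) = sc (c * d) A"
  by (simp add: sc_def vec_eq_iff mult_ac)

lemma sc_1[simp]: "sc 1 A = A"
  by (simp add: sc_def vec_eq_iff)

lemma sc_invertible: "invertible M \<Longrightarrow> c \<noteq> 0 \<Longrightarrow> invertible (sc c M)"
  unfolding invertible_right_inverse
  by (metis (no_types, lifting) sc_mult_left sc_mult_right sc_sc right_inverse sc_1)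

lemma act_mat_sc:
  fixes M :: "'a::{field}^3^3"
  assumes "invertible M" "c \<noteq> 0"
  shows "act_mat (sc c M) \<alpha> = act_mat M \<alpha>"
proof -
  have "act_mat (sc c M) \<alpha> = pt (c *s (pv \<alpha> v* M))"
    using act_mat_pv[OF sc_invertible[OF assms]] by (simp add: vm_sc)
  also have "\<dots> = pt (pv \<alpha> v* M)"
    using vm_nz[OF assms(1) pv_nz, of \<alpha>] assms(2) by (subst pt_eq) auto
  finally show ?thesis using act_mat_pv[OF assms(1)] by simp
qed



definition cls :: "'a::field^3^3 \<Rightarrow> ('a^3^3) set" where
  "cls M = {N. invertible N \<and> (\<exists>c. c \<noteq> 0 \<and> N = sc c M)}"

definition rep :: "('a::field^3^3) set \<Rightarrow> 'a^3^3" where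
  "rep g = (SOME M. M \<in> g)"

lemma PGL3_iff: "g \<in> PGL3 \<longleftrightarrow> (\<exists>M. invertible M \<and> g = cls M)"
  unfolding PGL3_def quotient_def cls_def sc_def by (auto simp: Image_def)

lemma cls_mem: "invertible M \<Longrightarrow> M \<in> cls M"
  unfolding cls_def by (auto intro: exI[of _ 1])

lemma mem_cls: "N \<in> cls M \<Longrightarrow> invertible N \<and> (\<exists>c. c \<noteq> 0 \<and> N = sc c M)"
  unfolding cls_def by auto

lemma rep_cls: "invertible M \<Longrightarrow> rep (cls M) \<in> cls M"
  unfolding rep_def using cls_mem by (metis someI)

lemma act_cls: "invertible (M::'a::field^3^3) \<Longrightarrow> act (cls M) = act_mat M"
proof
  fix \<alpha> assume M: "invertible M"
  obtain c where c: "c \<noteq> 0" "rep (cls M) = sc c M" using mem_cls[OF rep_cls[OF M]] by blast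
  show "act (cls M) \<alpha> = act_mat M \<alpha>"
    unfolding act_def rep_def[symmetric] c(2) using act_mat_sc[OF M c(1)] .
qed

lemma cls_sc: "invertible M \<Longrightarrow> c \<noteq> 0 \<Longrightarrow> cls (sc c M) = cls M"
proof -
  assume c: "c \<noteq> 0"
  have 1: "\<exists>e. e \<noteq> 0 \<and> sc d (sc c M) = sc e M" if "d \<noteq> 0" for d
    using that c by (intro exI[of _ "d*c"]) (simp add: sc_sc)
  have 2: "\<exists>e. e \<noteq> 0 \<and> sc d M = sc e (sc c M)" if "d \<noteq> 0" for d
    using that c by (intro exI[of _ "d/c"]) (simp add: sc_sc)
  show ?thesis unfolding cls_def using 1 2 by blast
qed

lemma act_inj:
  assumes "g \<in> PGL3" "act g x = act g y" shows "x = y"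
proof -
  obtain M where M: "invertible M" "g = cls M" using assms(1) PGL3_iff by blast
  obtain M' where "M ** M' = mat 1" using M(1) invertible_def by blast
  then show ?thesis using assms(2) act_mat_inv[of M M'] M act_cls by metis
qed

lemma finite_PGL3: "finite (PGL3 :: ('a::{finite,field}^3^3) set set)"
  by (rule finite_subset[of _ UNIV]) auto

lemma id_in_PGL3: "cls (mat 1) \<in> PGL3" "act (cls (mat 1 :: 'a::field^3^3)) = id"
  using PGL3_iff invertible_mat1 act_cls by (auto simp: fun_eq_iff act_cls[OF invertible_mat1])

definition Phi :: "'a::field^3^3 \<Rightarrow> 'a^3^3 \<Rightarrow> ('a^3^3) set \<Rightarrow> ('a^3^3) set" where
  "Phi H K g = cls (H ** rep g ** K)"

lemma Phi_in:
  assumes "invertible H" "invertible K" "g \<in> PGL3"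
  shows "Phi H K g \<in> PGL3" "act (Phi H K g) x = act_mat K (act g (act_mat H x))"
proof -
  obtain M where M: "invertible M" "g = cls M" using assms(3) PGL3_iff by blast
  obtain c where c: "c \<noteq> 0" "rep g = sc c M" using mem_cls[OF rep_cls[OF M(1)]] M(2) by blast
  have ir: "invertible (rep g)" using c sc_invertible M by simp
  have i: "invertible (H ** rep g ** K)" by (intro invertible_mult assms ir)
  show "Phi H K g \<in> PGL3" unfolding Phi_def using i PGL3_iff by blast
  have "act (Phi H K g) x = act_mat (H ** rep g ** K) x" unfolding Phi_def act_cls[OF i] ..
  also have "\<dots> = act_mat K (act_mat (rep g) (act_mat H x))"
    using act_mat_mult assms ir invertible_mult by metis
  also have "act_mat (rep g) = act g" using M c act_cls act_mat_sc by (metis ext)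
  finally show "act (Phi H K g) x = act_mat K (act g (act_mat H x))" .
qed

lemma Phi_Phi:
  assumes "invertible H" "invertible K" "invertible H'" "invertible K'" "g \<in> PGL3"
    "H' ** H = mat 1" "K ** K' = mat 1"
  shows "Phi H' K' (Phi H K g) = g"
proof -
  obtain M where M: "invertible M" "g = cls M" using assms(5) PGL3_iff by blast
  obtain c where c: "c \<noteq> 0" "rep g = sc c M" using mem_cls[OF rep_cls[OF M(1)]] M(2) by blast
  have ir: "invertible (rep g)" using c sc_invertible M by simp
  have i: "invertible (H ** rep g ** K)" by (intro invertible_mult assms ir)
  obtain d where d: "d \<noteq> 0" "rep (Phi H K g) = sc d (H ** rep g ** K)"
    using mem_cls[OF rep_cls[OF i]] unfolding Phi_def by blast
  have "H' ** rep (Phi H K g) ** K' = sc d (H' ** H ** rep g ** (K ** K'))"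
    unfolding d(2) by (simp add: sc_mult_left sc_mult_right matrix_mul_assoc)
  also have "\<dots> = sc (d * c) M" using assms(6,7) c(2) by (simp add: sc_sc)
  finally have "H' ** rep (Phi H K g) ** K' = sc (d * c) M" .
  moreover have "cls (sc (d*c) M) = cls M" using cls_sc[OF M(1)] c d by simp
  ultimately show ?thesis unfolding Phi_def[of H' K'] using M(2) by simp
qed

lemma card_transport:
  fixes H K :: "'a::{finite,field}^3^3"
  assumes "invertible H" "invertible K"
  shows "card {g\<in>PGL3. P (act g)} = card {g\<in>PGL3. P (\<lambda>x. act_mat K (act g (act_mat H x)))}"
proof -
  obtain H' where H': "H ** H' = mat 1" "H' ** H = mat 1" using assms(1) invertible_def by blast
  obtain K' where K': "K ** K' = mat 1" "K' ** K = mat 1" using assms(2) invertible_def by blast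
  have iH': "invertible H'" "invertible K'" using H' K' invertible_def by blast+
  have eqH: "act_mat H (act_mat H' x) = x" for x using act_mat_inv[OF H'(2)] .
  have eqK: "act_mat K (act_mat K' x) = x" for x using act_mat_inv[OF K'(2)] .
  show ?thesis
  proof (rule bij_betw_same_card[of "Phi H' K'"], rule bij_betw_byWitness[where f'="Phi H K"])
    show "\<forall>g\<in>{g\<in>PGL3. P (act g)}. Phi H K (Phi H' K' g) = g"
      using Phi_Phi[OF iH' assms] H' K' by auto
    show "\<forall>g\<in>{g\<in>PGL3. P (\<lambda>x. act_mat K (act g (act_mat H x)))}. Phi H' K' (Phi H K g) = g"
      using Phi_Phi[OF assms iH'] H' K' by auto
    show "Phi H' K' ` {g \<in> PGL3. P (act g)} \<subseteq> {g \<in> PGL3. P (\<lambda>x. act_mat K (act g (act_mat H x)))}"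
    proof clarify
      fix g assume g: "g \<in> PGL3" "P (act g)"
      have "(\<lambda>x. act_mat K (act (Phi H' K' g) (act_mat H x))) = act g"
        using Phi_in(2)[OF iH' g(1)] eqH eqK act_mat_inv[OF H'(1)] by (simp add: fun_eq_iff)
      then show "Phi H' K' g \<in> PGL3 \<and> P (\<lambda>x. act_mat K (act (Phi H' K' g) (act_mat H x)))"
        using Phi_in(1)[OF iH' g(1)] g(2) by simp
    qed
    show "Phi H K ` {g \<in> PGL3. P (\<lambda>x. act_mat K (act g (act_mat H x)))} \<subseteq> {g \<in> PGL3. P (act g)}"
    proof clarify
      fix g assume g: "g \<in> PGL3" "P (\<lambda>x. act_mat K (act g (act_mat H x)))"
      have "act (Phi H K g) = (\<lambda>x. act_mat K (act g (act_mat H x)))"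
        using Phi_in(2)[OF assms g(1)] by (simp add: fun_eq_iff)
      then show "Phi H K g \<in> PGL3 \<and> P (act (Phi H K g))"
        using Phi_in(1)[OF assms g(1)] g(2) by simp
    qed
  qed
qed



lemma axis_vm: "axis i (1::'a::field) v* (M::'a^3^3) = M $ i"
  by (simp add: vector_matrix_mult_def axis_def vec_eq_iff if_distrib if_distribR cong: if_cong)

definition mk3 :: "'a^3 \<Rightarrow> 'a^3 \<Rightarrow> 'a^3 \<Rightarrow> 'a^3^3" where
  "mk3 u w z = (\<chi> i. if i = 1 then u else if i = 2 then w else z)"

lemma mk3_rows: "mk3 u w z $ 1 = u" "mk3 u w z $ 2 = w" "mk3 u w z $ 3 = z"
  by (simp_all add: mk3_def)

lemma dep3:
  fixes u w :: "'a::field^3"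
  assumes "u \<noteq> 0"
    "u$2 * w$3 - u$3 * w$2 = 0" "u$3 * w$1 - u$1 * w$3 = 0" "u$1 * w$2 - u$2 * w$1 = 0"
  shows "\<exists>k. w = k *s u"
proof -
  obtain i where i: "u $ i \<noteq> 0" using assms(1) by (auto simp: vec_eq_iff)
  have cr: "\<forall>i j. w$j * u$i = w$i * u$j"
    unfolding forall_3 using assms(2-4) by (simp add: algebra_simps)
  have *: "w $ j = (w$i / u$i) * u $ j" for j
  proof -
    have h: "w$j * u$i = w$i * u$j" using cr by blast
    have "w$j = w$i*u$j/u$i" using i h by (simp add: eq_divide_eq)
    then show "w $ j = (w$i / u$i) * u $ j" by simp
  qed
  have "w = (w$i / u$i) *s u"
    unfolding vec_eq_iff vector_smult_component using * by blast
  then show ?thesis by blast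
qed

lemma frame_exists:
  fixes a c :: "'a::field ppoint"
  assumes "a \<noteq> c"
  shows "\<exists>M. invertible M \<and> act_mat M (pt (axis 1 1)) = a \<and> act_mat M (pt (axis 2 1)) = c"
proof -
  define u where "u = pv a"
  define w where "w = pv c"
  have u0: "u \<noteq> 0" and w0: "w \<noteq> 0" using pv_nz u_def w_def by auto
  have nd: "\<not> (\<exists>k. w = k *s u)"
  proof
    assume "\<exists>k. w = k *s u"
    then have "pt w = pt u" using pt_eq[OF w0 u0] by simp
    then show False using assms u_def w_def by simp
  qed
  have "\<exists>z. det (mk3 u w z) \<noteq> 0"
  proof (rule ccontr)
    assume "\<not> ?thesis"
    then have "det (mk3 u w (axis 1 1)) = 0" "det (mk3 u w (axis 2 1)) = 0" "det (mk3 u w (axis 3 1)) = 0"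
      by auto
    then have "u$2 * w$3 - u$3 * w$2 = 0" "u$3 * w$1 - u$1 * w$3 = 0" "u$1 * w$2 - u$2 * w$1 = 0"
      by (simp_all add: det_3 mk3_def axis_def algebra_simps)
    then show False using dep3[OF u0] nd by blast
  qed
  then obtain z where z: "det (mk3 u w z) \<noteq> 0" by blast
  have inv: "invertible (mk3 u w z)" using z invertible_det_nz by blast
  show ?thesis
    apply (rule exI[of _ "mk3 u w z"])
    using inv act_mat_pt[OF inv, of "axis 1 1"] act_mat_pt[OF inv, of "axis 2 1"]
    by (simp add: axis_vm mk3_rows axis_eq_0_iff u_def w_def)
qed

lemma two_trans:
  fixes a b c d :: "'a::field ppoint"
  assumes "a \<noteq> c" "b \<noteq> d"
  shows "\<exists>M. invertible M \<and> act_mat M a = b \<and> act_mat M c = d"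
proof -
  obtain M1 where M1: "invertible M1" "act_mat M1 (pt (axis 1 1)) = a" "act_mat M1 (pt (axis 2 1)) = c"
    using frame_exists[OF assms(1)] by blast
  obtain M2 where M2: "invertible M2" "act_mat M2 (pt (axis 1 1)) = b" "act_mat M2 (pt (axis 2 1)) = d"
    using frame_exists[OF assms(2)] by blast
  obtain M1' where M1': "M1 ** M1' = mat 1" "M1' ** M1 = mat 1" using M1(1) invertible_def by blast
  have i1: "invertible M1'" using M1' invertible_def by blast
  have "act_mat (M1' ** M2) x = act_mat M2 (act_mat M1' x)" for x using act_mat_mult[OF i1 M2(1)] .
  moreover have "act_mat M1' a = pt (axis 1 1)" "act_mat M1' c = pt (axis 2 1)"
    using act_mat_inv[OF M1'(1)] M1 by metis+
  ultimately show ?thesis using M2 invertible_mult[OF i1 M2(1)] by metis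
qed

lemma other_point: "\<exists>c. c \<noteq> (a::'a::field ppoint)"
proof -
  have "pt (axis (1::3) (1::'a)) \<noteq> pt (axis 2 1)"
  proof
    assume h: "pt (axis (1::3) (1::'a)) = pt (axis 2 1)"
    have n: "axis (1::3) (1::'a) \<noteq> 0" "axis (2::3) (1::'a) \<noteq> 0" by (simp_all add: axis_eq_0_iff)
    obtain k where "axis (1::3) (1::'a) = k *s axis 2 1" using pt_eq[OF n, THEN iffD1, OF h] by blast
    then have "axis (1::3) (1::'a) $ 1 = (k *s axis (2::3) 1) $ 1" by (rule arg_cong)
    then show False unfolding axis_def vector_smult_component by simp
  qed
  then have "pt (axis (1::3) (1::'a)) \<noteq> a \<or> pt (axis (2::3) 1) \<noteq> a" by auto
  then show ?thesis by blast
qed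

lemma one_trans:
  fixes a b :: "'a::field ppoint"
  shows "\<exists>M. invertible M \<and> act_mat M a = b"
proof -
  obtain c where "c \<noteq> a" using other_point by blast
  moreover obtain d where "d \<noteq> b" using other_point by blast
  ultimately show ?thesis using two_trans[of a c b d] by auto
qed



definition Ncnt :: "'a::{finite,field} ppoint \<Rightarrow> 'a ppoint \<Rightarrow> 'a ppoint \<Rightarrow> 'a ppoint \<Rightarrow> nat" where
  "Ncnt x y z w = card {g\<in>(PGL3::('a^3^3) set set). act g x = y \<and> act g z = w}"

lemma act_mat_inj:
  fixes K :: "'a::field^3^3"
  assumes "invertible K" "act_mat K x = act_mat K y" shows "x = y"
proof -
  obtain K' where "K ** K' = mat 1" using assms(1) invertible_def by blast
  then show ?thesis using act_mat_inv assms(2) by metis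
qed

lemma Ncnt_transport:
  fixes H K :: "'a::{finite,field}^3^3"
  assumes "invertible H" "invertible K" "act_mat K y' = y" "act_mat K w' = w"
  shows "Ncnt x y z w = Ncnt (act_mat H x) y' (act_mat H z) w'"
proof -
  have "Ncnt x y z w = card {g\<in>(PGL3::('a^3^3) set set). (\<lambda>f. f x = y \<and> f z = w) (act g)}"
    unfolding Ncnt_def by simp
  also have "\<dots> = card {g\<in>(PGL3::('a^3^3) set set).
      (\<lambda>f. f x = y \<and> f z = w) (\<lambda>x. act_mat K (act g (act_mat H x)))}"
    by (rule card_transport[OF assms(1,2)])
  also have "{g\<in>(PGL3::('a^3^3) set set).
      (\<lambda>f. f x = y \<and> f z = w) (\<lambda>x. act_mat K (act g (act_mat H x)))}
    = {g\<in>PGL3. act g (act_mat H x) = y' \<and> act g (act_mat H z) = w'}"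
    using act_mat_inj[OF assms(2)] assms(3,4) by auto
  finally show ?thesis unfolding Ncnt_def .
qed

definition p0 :: "'a::field ppoint" where "p0 = pt (axis 1 1)"
definition p1 :: "'a::field ppoint" where "p1 = pt (axis 2 1)"

lemma p0p1: "p0 \<noteq> (p1 :: 'a::field ppoint)"
proof
  assume h: "p0 = (p1 :: 'a ppoint)"
  have n: "axis (1::3) (1::'a) \<noteq> 0" "axis (2::3) (1::'a) \<noteq> 0" by (simp_all add: axis_eq_0_iff)
  obtain k where "axis (1::3) (1::'a) = k *s axis 2 1" using pt_eq[OF n, THEN iffD1] h
    unfolding p0_def p1_def by blast
  then have "axis (1::3) (1::'a) $ 1 = (k *s axis (2::3) 1) $ 1" by (rule arg_cong)
  then show False unfolding axis_def vector_smult_component by simp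
qed

definition N1 :: "'a::{finite,field} itself \<Rightarrow> nat" where
  "N1 _ = Ncnt (p0::'a ppoint) p0 p0 p0"
definition N2 :: "'a::{finite,field} itself \<Rightarrow> nat" where
  "N2 _ = Ncnt (p0::'a ppoint) p0 p1 p1"

lemma Ncnt_val:
  fixes a b c d :: "'a::{finite,field} ppoint"
  shows "Ncnt a b c d = (if a = c then (if b = d then N1 TYPE('a) else 0)
                         else (if b = d then 0 else N2 TYPE('a)))"
proof (cases "a = c")
  case True
  show ?thesis
  proof (cases "b = d")
    case True
    obtain H where H: "invertible H" "act_mat H p0 = a" using one_trans by blast
    obtain K where K: "invertible K" "act_mat K b = p0" using one_trans by blast
    have "N1 TYPE('a) = Ncnt a b a b"
      unfolding N1_def using Ncnt_transport[OF H(1) K(1) K(2) K(2), of p0 p0] H(2) by simp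
    then show ?thesis using \<open>a = c\<close> True by simp
  next
    case False
    have "{g\<in>(PGL3::('a^3^3) set set). act g a = b \<and> act g c = d} = {}" using \<open>a = c\<close> False by auto
    then show ?thesis unfolding Ncnt_def using \<open>a = c\<close> False by simp
  qed
next
  case False
  show ?thesis
  proof (cases "b = d")
    case True
    have "{g\<in>(PGL3::('a^3^3) set set). act g a = b \<and> act g c = d} = {}"
      using \<open>a \<noteq> c\<close> True act_inj by blast
    then show ?thesis unfolding Ncnt_def using \<open>a \<noteq> c\<close> True by simp
  next
    case False
    obtain H where H: "invertible H" "act_mat H p0 = a" "act_mat H p1 = c"
      using two_trans[OF p0p1 \<open>a \<noteq> c\<close>] by blast
    obtain K where K: "invertible K" "act_mat K b = p0" "act_mat K d = p1"
      using two_trans[OF False p0p1] by blast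
    have "N2 TYPE('a) = Ncnt a b c d"
      unfolding N2_def using Ncnt_transport[OF H(1) K(1) K(2) K(3), of p0 p1] H(2,3) by simp
    then show ?thesis using \<open>a \<noteq> c\<close> False by simp
  qed
qed

lemma N1_pos: "N1 TYPE('a::{finite,field}) > 0"
proof -
  have "act (cls (mat 1 :: 'a^3^3)) (p0::'a ppoint) = p0" using id_in_PGL3(2) by (metis id_apply)
  then have "cls (mat 1) \<in> {g\<in>(PGL3::('a^3^3) set set). act g p0 = p0 \<and> act g p0 = p0}"
    using id_in_PGL3(1) by simp
  moreover have "finite {g\<in>(PGL3::('a^3^3) set set). act g p0 = p0 \<and> act g p0 = p0}"
    using finite_PGL3 by simp
  ultimately show ?thesis unfolding N1_def Ncnt_def card_gt_0_iff by blast
qed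

lemma act_surj: "g \<in> PGL3 \<Longrightarrow> \<exists>c. act g c = b"
proof -
  assume "g \<in> PGL3"
  then obtain M where M: "invertible M" "g = cls M" using PGL3_iff by blast
  obtain M' where "M' ** M = mat 1" using M(1) invertible_def by blast
  then have "act_mat M (act_mat M' b) = b" using act_mat_inv by blast
  then show ?thesis using M act_cls[OF M(1)] by auto
qed



interpretation fv: vector_space "fscale :: complex \<Rightarrow> ('b \<Rightarrow> complex) \<Rightarrow> ('b \<Rightarrow> complex)"
  by unfold_locales (auto simp: fun_eq_iff algebra_simps)

lemma sum_fun: "(sum f A) x = (\<Sum>i\<in>A. f i x)"
  for f :: "'i \<Rightarrow> 'b \<Rightarrow> 'c::comm_monoid_add"
  by (induct A rule: infinite_finite_induct) auto

lemma sum_ind: "finite G \<Longrightarrow> (\<Sum>g\<in>G. (if P g then 1 else 0)::complex) = of_nat (card {g\<in>G. P g})"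
proof -
  assume G: "finite G"
  have "(\<Sum>g\<in>G. (if P g then 1 else 0)::complex) = (\<Sum>g\<in>G. of_bool (P g))" by (simp add: of_bool_def)
  also have "\<dots> = of_nat (card (G \<inter> {x. P x}))" using G by simp
  also have "G \<inter> {x. P x} = {g\<in>G. P g}" by blast
  finally show ?thesis .
qed

definition dl :: "'x \<Rightarrow> 'x \<Rightarrow> complex" where
  "dl q = (\<lambda>p. if p = q then 1 else 0)"

definition Rm :: "'a ppoint \<Rightarrow> 'a ppoint \<Rightarrow> 'a ppoint \<Rightarrow> ('a::field ppoint \<times> 'a ppoint \<Rightarrow> complex)" where
  "Rm abar a b = dl (a,b) - dl (a,abar) - dl (abar,b) + dl (abar,abar)"

definition wt :: "'a ppoint \<Rightarrow> 'a ppoint \<Rightarrow> 'a ppoint \<Rightarrow> ('a::field^3^3) set \<Rightarrow> complex" where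
  "wt abar a b g = (if act g a = b then 1 else 0) - (if act g a = abar then 1 else 0)
      - (if act g abar = b then 1 else 0) + (if act g abar = abar then 1 else 0)"

definition Tm :: "'a ppoint \<Rightarrow> 'a ppoint \<Rightarrow> 'a ppoint \<Rightarrow> ('a::{finite,field} ppoint \<times> 'a ppoint \<Rightarrow> complex)" where
  "Tm abar a b = (\<Sum>g\<in>(PGL3::('a^3^3) set set). fscale (wt abar a b g) (Amat g))"

lemma count_sum:
  "(\<Sum>g\<in>(PGL3::('a::{finite,field}^3^3) set set). Amat g (c,d) * (if act g x = y then 1 else 0))
     = of_nat (Ncnt x y c d)"
proof -
  have "(\<Sum>g\<in>(PGL3::('a^3^3) set set). Amat g (c,d) * (if act g x = y then 1 else 0))
      = (\<Sum>g\<in>(PGL3::('a^3^3) set set). (if act g x = y \<and> act g c = d then 1 else 0))"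
    by (rule sum.cong) (auto simp: Amat_def)
  also have "\<dots> = of_nat (Ncnt x y c d)" unfolding Ncnt_def by (rule sum_ind[OF finite_PGL3])
  finally show ?thesis .
qed

lemma Tm_val:
  fixes abar a b :: "'a::{finite,field} ppoint"
  shows "Tm abar a b (c,d) = of_nat (Ncnt a b c d) - of_nat (Ncnt a abar c d)
     - of_nat (Ncnt abar b c d) + of_nat (Ncnt abar abar c d)"
proof -
  have "Tm abar a b (c,d) = (\<Sum>g\<in>(PGL3::('a^3^3) set set). Amat g (c,d) * wt abar a b g)"
    unfolding Tm_def sum_fun by (simp add: mult.commute)
  also have "\<dots> = (\<Sum>g\<in>(PGL3::('a^3^3) set set). Amat g (c,d) * (if act g a = b then 1 else 0))
     - (\<Sum>g\<in>(PGL3::('a^3^3) set set). Amat g (c,d) * (if act g a = abar then 1 else 0))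
     - (\<Sum>g\<in>(PGL3::('a^3^3) set set). Amat g (c,d) * (if act g abar = b then 1 else 0))
     + (\<Sum>g\<in>(PGL3::('a^3^3) set set). Amat g (c,d) * (if act g abar = abar then 1 else 0))"
    unfolding wt_def by (simp add: algebra_simps sum.distrib sum_subtractf)
  finally show ?thesis unfolding count_sum .
qed

lemma Tm_eq:
  fixes abar a b :: "'a::{finite,field} ppoint"
  assumes "a \<noteq> abar" "b \<noteq> abar"
  shows "Tm abar a b = fscale (of_nat (N1 TYPE('a) + N2 TYPE('a))) (Rm abar a b)"
proof
  fix p :: "'a ppoint \<times> 'a ppoint"
  obtain c d where p: "p = (c,d)" by (cases p)
  show "Tm abar a b p = of_nat (N1 TYPE('a) + N2 TYPE('a)) * Rm abar a b p"
    unfolding p Tm_val Ncnt_val Rm_def dl_def using assms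
    by (auto simp: algebra_simps)
qed

lemma dl_sum: "(\<Sum>p\<in>UNIV. dl q p * x p) = x q" for x :: "'x::finite \<Rightarrow> complex"
  unfolding dl_def by (simp add: if_distrib if_distribR cong: if_cong)

lemma Rm_apply: "Rm abar a b p = dl (a,b) p - dl (a,abar) p - dl (abar,b) p + dl (abar,abar) p"
  unfolding Rm_def by simp

lemma Rm_sum: "(\<Sum>p\<in>UNIV. Rm abar a b p * x p) = x (a,b) - x (a,abar) - x (abar,b) + x (abar,abar)"
  for abar a b :: "'a::{finite,field} ppoint"
proof -
  have "(\<Sum>p\<in>UNIV. Rm abar a b p * x p) = (\<Sum>p\<in>UNIV. dl (a,b) p * x p) - (\<Sum>p\<in>UNIV. dl (a,abar) p * x p)
     - (\<Sum>p\<in>UNIV. dl (abar,b) p * x p) + (\<Sum>p\<in>UNIV. dl (abar,abar) p * x p)"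
    unfolding Rm_apply by (simp add: algebra_simps sum.distrib sum_subtractf)
  then show ?thesis unfolding dl_sum .
qed

lemma kernel_rect:
  fixes abar a b :: "'a::{finite,field} ppoint"
  assumes x: "x \<in> A_kernel TYPE('a)" and "a \<noteq> abar" "b \<noteq> abar"
  shows "x (a,b) - x (a,abar) - x (abar,b) + x (abar,abar) = 0"
proof -
  have "(\<Sum>p\<in>UNIV. Tm abar a b p * x p)
     = (\<Sum>g\<in>(PGL3::('a^3^3) set set). wt abar a b g * (\<Sum>p\<in>UNIV. Amat g p * x p))"
    unfolding Tm_def sum_fun by (simp add: sum_distrib_left sum_distrib_right sum.swap[of _ UNIV] mult_ac)
  also have "\<dots> = 0" using x unfolding A_kernel_def by simp
  finally have "(\<Sum>p\<in>UNIV. Tm abar a b p * x p) = 0" .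
  then have "of_nat (N1 TYPE('a) + N2 TYPE('a)) * (\<Sum>p\<in>UNIV. Rm abar a b p * x p) = 0"
    unfolding Tm_eq[OF assms(2,3)] by (simp add: sum_distrib_left mult_ac)
  moreover have "of_nat (N1 TYPE('a) + N2 TYPE('a)) \<noteq> (0::complex)"
  proof -
    have "N1 TYPE('a) + N2 TYPE('a) \<noteq> 0" using N1_pos[where 'a='a] by simp
    then show ?thesis by (simp only: of_nat_eq_0_iff) simp
  qed
  ultimately show ?thesis unfolding Rm_sum by simp
qed



lemma sum_pairs: "(\<Sum>p\<in>UNIV. f p) = (\<Sum>c\<in>UNIV. \<Sum>d\<in>UNIV. f (c,d))"
  for f :: "'x::finite \<times> 'y::finite \<Rightarrow> 'c::comm_monoid_add"
  unfolding sum.cartesian_product by simp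
lemma e1_apply: "e1 \<beta> (c,d) = (if c = \<beta> then 1 else 0)" by (simp add: e1_def)
lemma sum_d1: "(\<Sum>d\<in>(UNIV::'x::finite set). (if a = d then 1 else 0)::complex) = 1"
  by (subst sum.delta') simp_all
lemma sum_d2: "(\<Sum>d\<in>(UNIV::'x::finite set). (if d = a then 1 else 0)::complex) = 1"
  by (subst sum.delta) simp_all
lemma row_e1:
  fixes g :: "('a::{finite,field}^3^3) set"
  shows "(\<Sum>p\<in>UNIV. Amat g p * e1 (\<beta>::'a ppoint) p) = 1"
proof -
  have "(\<Sum>p\<in>UNIV. Amat g p * e1 \<beta> p)
     = (\<Sum>c\<in>UNIV. (if c = \<beta> then 1 else 0) * (\<Sum>d\<in>UNIV. (if act g c = d then 1 else 0)))"
    unfolding sum_pairs e1_apply Amat_def sum_distrib_left by (intro sum.cong refl) (simp add: mult.commute)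
  also have "\<dots> = (\<Sum>c\<in>UNIV. (if c = \<beta> then 1 else 0))" by (simp only: sum_d1 mult_1_right)
  also have "\<dots> = 1" by (rule sum_d2)
  finally show ?thesis .
qed
lemma e2_apply: "e2 \<beta> (c,d) = (if d = \<beta> then 1 else 0)" by (simp add: e2_def)

lemma sum_dm: "(\<Sum>d\<in>(UNIV::'x::finite set). (if a = d then 1 else 0) * f d) = (f a::complex)"
proof -
  have "(\<Sum>d\<in>UNIV. (if a = d then 1 else 0) * f d) = (\<Sum>d\<in>UNIV. if a = d then f a else 0)"
    by (intro sum.cong refl) simp
  also have "\<dots> = f a" by (subst sum.delta') simp_all
  finally show ?thesis .
qed

lemma preimage_single:
  assumes "g \<in> PGL3"
  shows "{c. act g c = \<beta>} = {SOME c. act g c = \<beta>}"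
proof -
  obtain c0 where c0: "act g c0 = \<beta>" using act_surj[OF assms] by blast
  have s: "act g (SOME c. act g c = \<beta>) = \<beta>" by (rule someI[of _ c0]) (rule c0)
  show ?thesis
  proof (rule set_eqI)
    fix c
    show "c \<in> {c. act g c = \<beta>} \<longleftrightarrow> c \<in> {SOME c. act g c = \<beta>}"
      using act_inj[OF assms, of c "SOME c. act g c = \<beta>"] s by auto
  qed
qed

lemma row_e2:
  fixes g :: "('a::{finite,field}^3^3) set"
  assumes "g \<in> PGL3"
  shows "(\<Sum>p\<in>UNIV. Amat g p * e2 (\<beta>::'a ppoint) p) = 1"
proof -
  have "(\<Sum>p\<in>UNIV. Amat g p * e2 \<beta> p) = (\<Sum>c\<in>UNIV. (if act g c = \<beta> then 1 else 0))"
    unfolding sum_pairs e2_apply Amat_def fst_conv snd_conv sum_dm ..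
  also have "\<dots> = of_nat (card {c\<in>UNIV. act g c = \<beta>})" by (rule sum_ind) simp
  also have "\<dots> = 1" using preimage_single[OF assms] by simp
  finally show ?thesis .
qed

lemma kernel_subspace: "fv.subspace (A_kernel TYPE('a::{finite,field}))"
proof -
  have add: "(\<Sum>p\<in>UNIV. Amat g p * (x + y) p) = (\<Sum>p\<in>UNIV. Amat g p * x p) + (\<Sum>p\<in>UNIV. Amat g p * y p)"
    for g :: "('a^3^3) set" and x y :: "'a ppoint \<times> 'a ppoint \<Rightarrow> complex"
    by (simp add: distrib_left sum.distrib)
  have sc: "(\<Sum>p\<in>UNIV. Amat g p * (c * x p)) = c * (\<Sum>p\<in>UNIV. Amat g p * x p)"
    for g :: "('a^3^3) set" and x :: "'a ppoint \<times> 'a ppoint \<Rightarrow> complex" and c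
    by (simp add: sum_distrib_left mult_ac)
  show ?thesis unfolding fv.subspace_def A_kernel_def using add sc by auto
qed

lemma gens_in_kernel:
  fixes abar :: "'a::{finite,field} ppoint"
  shows "(\<lambda>\<alpha>. e1 abar - e1 \<alpha>) ` UNIV \<union> (\<lambda>\<alpha>. e2 abar - e2 \<alpha>) ` UNIV \<subseteq> A_kernel TYPE('a)"
proof -
  have "(\<Sum>p\<in>UNIV. Amat g p * (e1 abar - e1 \<alpha>) p) = 0" if "g \<in> PGL3" for g :: "('a^3^3) set" and \<alpha>
    using row_e1[of g abar] row_e1[of g \<alpha>] by (simp add: algebra_simps sum_subtractf)
  moreover have "(\<Sum>p\<in>UNIV. Amat g p * (e2 abar - e2 \<alpha>) p) = 0" if "g \<in> PGL3" for g :: "('a^3^3) set" and \<alpha>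
    using row_e2[OF that, of abar] row_e2[OF that, of \<alpha>] by (simp add: algebra_simps sum_subtractf)
  ultimately show ?thesis unfolding A_kernel_def by auto
qed

lemma span_sub_kernel:
  fixes abar :: "'a::{finite,field} ppoint"
  shows "cspanV ((\<lambda>\<alpha>. e1 abar - e1 \<alpha>) ` UNIV \<union> (\<lambda>\<alpha>. e2 abar - e2 \<alpha>) ` UNIV) \<subseteq> A_kernel TYPE('a)"
  by (rule fv.span_minimal[OF gens_in_kernel kernel_subspace])

lemma diag_sum:
  fixes x :: "'a::{finite,field} ppoint \<times> 'a ppoint \<Rightarrow> complex"
  assumes "x \<in> A_kernel TYPE('a)"
  shows "(\<Sum>c\<in>UNIV. x (c,c)) = 0"
proof -
  have "(\<Sum>p\<in>UNIV. Amat (cls (mat 1 :: 'a^3^3)) p * x p) = 0"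
    using assms id_in_PGL3(1) unfolding A_kernel_def by blast
  moreover have "act (cls (mat 1 :: 'a^3^3)) c = c" for c using id_in_PGL3(2) by (metis id_apply)
  ultimately show ?thesis unfolding sum_pairs Amat_def fst_conv snd_conv sum_dm by simp
qed



lemma kernel_sub_span:
  fixes abar :: "'a::{finite,field} ppoint"
  assumes x: "x \<in> A_kernel TYPE('a)"
  shows "x \<in> cspanV ((\<lambda>\<alpha>. e1 abar - e1 \<alpha>) ` UNIV \<union> (\<lambda>\<alpha>. e2 abar - e2 \<alpha>) ` UNIV)"
proof -
  define G where "G = (\<lambda>\<alpha>. e1 abar - e1 \<alpha>) ` UNIV \<union> (\<lambda>\<alpha>. e2 abar - e2 \<alpha>) ` UNIV"
  define u where "u a = x (a,abar)" for a
  define v where "v b = x (abar,b) - x (abar,abar)" for b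
  define n :: complex where "n = of_nat (card (UNIV :: 'a ppoint set))"
  define s where "s = sum u UNIV"
  have n0: "n \<noteq> 0" unfolding n_def by simp
  have xuv: "x (a,b) = u a + v b" for a b
  proof (cases "a = abar \<or> b = abar")
    case True then show ?thesis unfolding u_def v_def by auto
  next
    case False then show ?thesis using kernel_rect[where abar=abar and a=a and b=b, OF x] unfolding u_def v_def
      by (simp add: algebra_simps)
  qed
  have "(\<Sum>c\<in>UNIV. u c + v c) = 0" using diag_sum[OF x] xuv by simp
  then have sv: "sum v UNIV = - s" unfolding s_def by (simp add: sum.distrib eq_neg_iff_add_eq_0 add.commute)
  define y where "y = (\<Sum>\<alpha>\<in>UNIV. fscale (- u \<alpha>) (e1 abar - e1 \<alpha>))
     + (\<Sum>\<alpha>\<in>UNIV. fscale (- v \<alpha>) (e2 abar - e2 \<alpha>))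
     + fscale (s / n) (\<Sum>\<alpha>\<in>UNIV. e1 abar - e1 \<alpha>) - fscale (s / n) (\<Sum>\<alpha>\<in>UNIV. e2 abar - e2 \<alpha>)"
  have L1: "(\<Sum>\<alpha>\<in>UNIV. fscale (k \<alpha>) (e1 abar - e1 \<alpha>)) (c,d) = (if c = abar then sum k UNIV else 0) - k c"
    for k :: "'a ppoint \<Rightarrow> complex" and c d
  proof -
    have "(\<Sum>\<alpha>\<in>UNIV. fscale (k \<alpha>) (e1 abar - e1 \<alpha>)) (c,d)
        = (\<Sum>\<alpha>\<in>UNIV. k \<alpha> * (if c = abar then 1 else 0)) - (\<Sum>\<alpha>\<in>UNIV. (if c = \<alpha> then 1 else 0) * k \<alpha>)"
      unfolding sum_fun e1_apply fun_diff_def by (simp add: right_diff_distrib sum_subtractf mult.commute)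
    also have "\<dots> = (if c = abar then sum k UNIV else 0) - k c"
      unfolding sum_dm sum_distrib_right[symmetric] by simp
    finally show ?thesis .
  qed
  have L2: "(\<Sum>\<alpha>\<in>UNIV. fscale (k \<alpha>) (e2 abar - e2 \<alpha>)) (c,d) = (if d = abar then sum k UNIV else 0) - k d"
    for k :: "'a ppoint \<Rightarrow> complex" and c d
  proof -
    have "(\<Sum>\<alpha>\<in>UNIV. fscale (k \<alpha>) (e2 abar - e2 \<alpha>)) (c,d)
        = (\<Sum>\<alpha>\<in>UNIV. k \<alpha> * (if d = abar then 1 else 0)) - (\<Sum>\<alpha>\<in>UNIV. (if d = \<alpha> then 1 else 0) * k \<alpha>)"
      unfolding sum_fun e2_apply fun_diff_def by (simp add: right_diff_distrib sum_subtractf mult.commute)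
    also have "\<dots> = (if d = abar then sum k UNIV else 0) - k d"
      unfolding sum_dm sum_distrib_right[symmetric] by simp
    finally show ?thesis .
  qed
  have L3: "(\<Sum>\<alpha>\<in>UNIV. e1 abar - e1 \<alpha>) (c,d) = (if c = abar then n else 0) - 1" for c d
  proof -
    have "(\<Sum>\<alpha>\<in>UNIV. e1 abar - e1 \<alpha>) = (\<Sum>\<alpha>\<in>UNIV. fscale 1 (e1 abar - e1 \<alpha>))" by (simp add: fun_diff_def)
    then show ?thesis using L1[of "\<lambda>_. 1" c d] unfolding n_def by simp
  qed
  have L4: "(\<Sum>\<alpha>\<in>UNIV. e2 abar - e2 \<alpha>) (c,d) = (if d = abar then n else 0) - 1" for c d
  proof -
    have "(\<Sum>\<alpha>\<in>UNIV. e2 abar - e2 \<alpha>) = (\<Sum>\<alpha>\<in>UNIV. fscale 1 (e2 abar - e2 \<alpha>))" by (simp add: fun_diff_def)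
    then show ?thesis using L2[of "\<lambda>_. 1" c d] unfolding n_def by simp
  qed
  have "x = y"
  proof
    fix p :: "'a ppoint \<times> 'a ppoint"
    obtain c d where p: "p = (c,d)" by (cases p)
    have "y (c,d) = ((if c = abar then - s else 0) + u c) + ((if d = abar then s else 0) + v d)
        + (s/n) * ((if c = abar then n else 0) - 1) - (s/n) * ((if d = abar then n else 0) - 1)"
      unfolding y_def using L1[of "\<lambda>\<alpha>. - u \<alpha>" c d] L2[of "\<lambda>\<alpha>. - v \<alpha>" c d] L3[of c d] L4[of c d]
      by (simp add: sum_negf s_def[symmetric] sv)
    also have "\<dots> = u c + v d" using n0 by (simp add: field_simps)
    finally show "x p = y p" unfolding p xuv by simp
  qed
  moreover have "y \<in> cspanV G"
  proof -
    have g1: "e1 abar - e1 \<alpha> \<in> cspanV G" for \<alpha> unfolding G_def by (rule fv.span_base) blast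
    have g2: "e2 abar - e2 \<alpha> \<in> cspanV G" for \<alpha> unfolding G_def by (rule fv.span_base) blast
    show ?thesis unfolding y_def
      by (intro fv.span_add fv.span_diff fv.span_sum fv.span_scale g1 g2)
  qed
  ultimately show ?thesis unfolding G_def by simp
qed



lemma indep_crit:
  fixes S :: "('x \<Rightarrow> complex) set"
  assumes fin: "finite S" and b0: "b0 \<in> S" "b0 \<noteq> 0"
    and pts: "\<And>v. v \<in> S \<Longrightarrow> v \<noteq> b0 \<Longrightarrow> \<exists>p. v p \<noteq> 0 \<and> (\<forall>w\<in>S. w \<noteq> v \<longrightarrow> w p = 0)"
  shows "\<not> fv.dependent S"
proof
  assume "fv.dependent S"
  then obtain u where u: "\<exists>v\<in>S. u v \<noteq> 0" "(\<Sum>v\<in>S. fscale (u v) v) = 0"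
    using fv.dependent_finite[OF fin] by blast
  have ev: "(\<Sum>w\<in>S. u w * w p) = 0" for p
    using fun_cong[OF u(2), of p] unfolding sum_fun by simp
  have z1: "u v = 0" if v: "v \<in> S" "v \<noteq> b0" for v
  proof -
    obtain p where p: "v p \<noteq> 0" "\<forall>w\<in>S. w \<noteq> v \<longrightarrow> w p = 0" using pts[OF v] by blast
    have "(\<Sum>w\<in>S. u w * w p) = u v * v p + (\<Sum>w\<in>S - {v}. u w * w p)"
      using fin v(1) by (simp add: sum.remove)
    also have "(\<Sum>w\<in>S - {v}. u w * w p) = 0" using p(2) by (intro sum.neutral) auto
    finally show ?thesis using ev[of p] p(1) by simp
  qed
  have "u b0 * b0 p = 0" for p
  proof -
    have "(\<Sum>w\<in>S. u w * w p) = u b0 * b0 p + (\<Sum>w\<in>S - {b0}. u w * w p)"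
      using fin b0(1) by (simp add: sum.remove)
    also have "(\<Sum>w\<in>S - {b0}. u w * w p) = 0" using z1 by (intro sum.neutral) auto
    finally show ?thesis using ev[of p] by simp
  qed
  moreover obtain q where "b0 q \<noteq> 0" using b0(2) by (auto simp: fun_eq_iff)
  ultimately have "u b0 = 0" by (metis mult_eq_0_iff)
  then show False using u(1) z1 by metis
qed

lemma Rm_pt: "Rm abar a b (c,d) = ((if c = a then 1 else 0) - (if c = abar then 1 else 0))
   * ((if d = b then 1 else 0) - (if d = abar then 1 else 0))"
  unfolding Rm_apply dl_def by (simp add: algebra_simps)

lemma HI: "c \<noteq> z \<Longrightarrow> (\<Sum>a\<in>UNIV-{z}. f a * ((if c = a then 1 else 0) - (if c = z then 1 else 0))) = (f c :: complex)"
  for f :: "'x::finite \<Rightarrow> complex"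
proof -
  assume c: "c \<noteq> z"
  have "(\<Sum>a\<in>UNIV-{z}. f a * ((if c = a then 1 else 0) - (if c = z then 1 else 0)))
      = (\<Sum>a\<in>UNIV-{z}. if c = a then f c else 0)" using c by (intro sum.cong refl) auto
  also have "\<dots> = f c" using c by (subst sum.delta') simp_all
  finally show ?thesis .
qed

lemma Hz: "(\<Sum>a\<in>UNIV-{z}. f a * ((if z = a then 1 else 0) - (if z = z then 1 else 0)))
    = (f z :: complex) - (\<Sum>a\<in>UNIV. f a)"
  for f :: "'x::finite \<Rightarrow> complex"
proof -
  have "(\<Sum>a\<in>UNIV-{z}. f a * ((if z = a then 1 else 0) - (if z = z then 1 else 0)))
      = (\<Sum>a\<in>UNIV-{z}. - f a)" by (intro sum.cong refl) auto
  also have "\<dots> = - (\<Sum>a\<in>UNIV-{z}. f a)" by (simp add: sum_negf)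
  also have "(\<Sum>a\<in>UNIV-{z}. f a) = (\<Sum>a\<in>UNIV. f a) - f z" by (simp add: sum_diff1)
  finally show ?thesis by simp
qed

definition B0 :: "'a ppoint \<Rightarrow> ('a::{finite,field} ppoint \<times> 'a ppoint \<Rightarrow> complex)" where
  "B0 abar = (\<lambda>(c,d). if c = abar \<and> d = abar then 2 - of_nat (card (UNIV :: 'a ppoint set))
     else if c = abar \<or> d = abar then 1 else 0)"

lemma decomp:
  fixes abar :: "'a::{finite,field} ppoint" and M :: "'a ppoint \<times> 'a ppoint \<Rightarrow> complex"
  assumes rs: "\<And>c. (\<Sum>d\<in>UNIV. M (c,d)) = 1" and cs: "\<And>d. (\<Sum>c\<in>UNIV. M (c,d)) = 1"
  shows "M = B0 abar + (\<Sum>q\<in>(UNIV-{abar}) \<times> (UNIV-{abar}). fscale (M q) (Rm abar (fst q) (snd q)))"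
proof
  fix p :: "'a ppoint \<times> 'a ppoint"
  obtain c d where p: "p = (c,d)" by (cases p)
  define n :: complex where "n = of_nat (card (UNIV :: 'a ppoint set))"
  define Y where "Y b = (if d = b then 1 else 0) - (if d = abar then 1 else (0::complex))" for b
  define X where "X a = (if c = a then 1 else 0) - (if c = abar then 1 else (0::complex))" for a
  define inner where "inner a = (\<Sum>b\<in>UNIV-{abar}. M (a,b) * Y b)" for a
  have s1: "(\<Sum>q\<in>(UNIV-{abar}) \<times> (UNIV-{abar}). fscale (M q) (Rm abar (fst q) (snd q))) (c,d)
      = (\<Sum>q\<in>(UNIV-{abar}) \<times> (UNIV-{abar}). M q * (X (fst q) * Y (snd q)))"
    by (simp only: sum_fun Rm_pt X_def Y_def)
  have s2: "(\<Sum>a\<in>UNIV-{abar}. inner a * X a) = (\<Sum>a\<in>UNIV-{abar}. \<Sum>b\<in>UNIV-{abar}. M (a,b) * (X a * Y b))"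
    unfolding inner_def by (simp add: sum_distrib_left sum_distrib_right mult_ac)
  have s3: "(\<Sum>a\<in>UNIV-{abar}. \<Sum>b\<in>UNIV-{abar}. M (a,b) * (X a * Y b))
      = (\<Sum>q\<in>(UNIV-{abar}) \<times> (UNIV-{abar}). M q * (X (fst q) * Y (snd q)))"
    by (subst sum.cartesian_product) (simp add: case_prod_beta)
  have sumeq: "(\<Sum>q\<in>(UNIV-{abar}) \<times> (UNIV-{abar}). fscale (M q) (Rm abar (fst q) (snd q))) (c,d)
      = (\<Sum>a\<in>UNIV-{abar}. inner a * X a)"
    using s1 s2 s3 by simp
  have inn: "inner a = (if d = abar then M (a,abar) - 1 else M (a,d))" for a
  proof (cases "d = abar")
    case True
    have "inner a = M (a,abar) - (\<Sum>b\<in>UNIV. M (a,b))"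
      unfolding inner_def Y_def True by (rule Hz)
    then show ?thesis using rs True by simp
  next
    case False
    show ?thesis unfolding inner_def Y_def using HI[OF False, of "\<lambda>b. M (a,b)"] False by simp
  qed
  have cardI: "(\<Sum>a\<in>UNIV-{abar}. (1::complex)) = n - 1"
    unfolding n_def by (simp add: card_Diff_singleton of_nat_diff card_ge_0_finite Suc_leI)
  show "M p = (B0 abar + (\<Sum>q\<in>(UNIV-{abar}) \<times> (UNIV-{abar}). fscale (M q) (Rm abar (fst q) (snd q)))) p"
    unfolding p plus_fun_apply sumeq
  proof (cases "c = abar")
    case True
    have "(\<Sum>a\<in>UNIV-{abar}. inner a * X a) = inner abar - (\<Sum>a\<in>UNIV. inner a)"
      unfolding X_def True by (rule Hz)
    also have "\<dots> = (if d = abar then M (abar,abar) + n - 2 else M (abar,d) - 1)"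
    proof (cases "d = abar")
      case True
      have "(\<Sum>a\<in>UNIV. inner a) = (\<Sum>a\<in>UNIV. M (a,abar)) - (\<Sum>a\<in>(UNIV::'a ppoint set). 1)"
        unfolding inn using True by (simp add: sum_subtractf)
      then have "(\<Sum>a\<in>UNIV. inner a) = 1 - n" using cs unfolding n_def by simp
      then show ?thesis using True inn by simp
    next
      case False
      have "(\<Sum>a\<in>UNIV. inner a) = 1" using cs False unfolding inn by simp
      then show ?thesis using False inn by simp
    qed
    finally show "M (c,d) = B0 abar (c,d) + (\<Sum>a\<in>UNIV-{abar}. inner a * X a)"
      using True unfolding B0_def n_def by auto
  next
    case False
    have "(\<Sum>a\<in>UNIV-{abar}. inner a * X a) = inner c"
      unfolding X_def using HI[OF False, of inner] by simp
    then show "M (c,d) = B0 abar (c,d) + (\<Sum>a\<in>UNIV-{abar}. inner a * X a)"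
      using False unfolding B0_def inn by auto
  qed
qed



lemma Amat_rs:
  fixes g :: "('a::{finite,field}^3^3) set" and c :: "'a ppoint"
  shows "(\<Sum>d\<in>UNIV. Amat g (c,d)) = 1"
  unfolding Amat_def fst_conv snd_conv by (rule sum_d1)

lemma Amat_cs:
  fixes g :: "('a::{finite,field}^3^3) set"
  assumes "g \<in> PGL3"
  shows "(\<Sum>c\<in>UNIV. Amat g (c,d)) = 1"
proof -
  have "(\<Sum>c\<in>UNIV. Amat g (c,d)) = (\<Sum>c\<in>UNIV. (if act g c = (d::'a ppoint) then 1 else 0))"
    unfolding Amat_def fst_conv snd_conv ..
  also have "\<dots> = of_nat (card {c\<in>UNIV. act g c = d})" by (rule sum_ind) simp
  also have "\<dots> = 1" using preimage_single[OF assms] by simp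
  finally show ?thesis .
qed

lemma Amat_decomp:
  fixes g :: "('a::{finite,field}^3^3) set" and abar :: "'a ppoint"
  assumes "g \<in> PGL3"
  shows "Amat g = B0 abar + (\<Sum>q\<in>(UNIV-{abar}) \<times> (UNIV-{abar}). fscale (Amat g q) (Rm abar (fst q) (snd q)))"
  by (rule decomp[OF Amat_rs Amat_cs[OF assms]])

lemma Rm_in_span:
  fixes abar a b :: "'a::{finite,field} ppoint"
  assumes "a \<noteq> abar" "b \<noteq> abar"
  shows "Rm abar a b \<in> cspanV {Amat g | g :: ('a ^ 3 ^ 3) set. g \<in> PGL3}"
proof -
  let ?W = "{Amat g | g :: ('a ^ 3 ^ 3) set. g \<in> PGL3}"
  have T: "Tm abar a b \<in> cspanV ?W"
    unfolding Tm_def by (intro fv.span_sum fv.span_scale fv.span_base) blast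
  define k :: complex where "k = of_nat (N1 TYPE('a) + N2 TYPE('a))"
  have k0: "k \<noteq> 0"
  proof -
    have "N1 TYPE('a) + N2 TYPE('a) \<noteq> 0" using N1_pos[where 'a='a] by simp
    then show ?thesis unfolding k_def by (simp only: of_nat_eq_0_iff) simp
  qed
  have eq: "Rm abar a b = fscale (1/k) (Tm abar a b)"
    unfolding Tm_eq[OF assms] k_def[symmetric] using k0 by (simp add: fun_eq_iff)
  show ?thesis by (subst eq) (rule fv.span_scale[OF T])
qed

lemma main_rank:
  fixes abar :: "'a::{finite,field} ppoint"
  shows "A_rank TYPE('a) = (card (UNIV :: 'a ppoint set) - 1)^2 + 1"
proof -
  let ?W = "{Amat g | g :: ('a ^ 3 ^ 3) set. g \<in> PGL3}"
  define I where "I = (UNIV :: 'a ppoint set) - {abar}"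
  define rr where "rr q = Rm abar (fst q) (snd q)" for q
  define S where "S = insert (B0 abar) (rr ` (I \<times> I))"
  have rr_pt: "rr (a,b) (a,b) = 1" if "a \<in> I" "b \<in> I" for a b
    using that unfolding rr_def I_def Rm_pt by simp
  have rr_pt0: "rr (a',b') (a,b) = 0" if "a \<in> I" "b \<in> I" "(a',b') \<noteq> (a,b)" for a b a' b'
    using that unfolding rr_def I_def Rm_pt by auto
  have B0_pt: "B0 abar (a,b) = 0" if "a \<in> I" "b \<in> I" for a b
    using that unfolding B0_def I_def by simp
  have WS: "?W \<subseteq> cspanV S"
  proof clarify
    fix g :: "('a^3^3) set" assume g: "g \<in> PGL3"
    have b: "B0 abar \<in> cspanV S" unfolding S_def by (intro fv.span_base) simp
    have r: "rr q \<in> cspanV S" if "q \<in> I \<times> I" for q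
      using that unfolding S_def by (intro fv.span_base) simp
    have s: "(\<Sum>q\<in>I \<times> I. fscale (Amat g q) (rr q)) \<in> cspanV S"
      by (intro fv.span_sum fv.span_scale r)
    have eq: "Amat g = B0 abar + (\<Sum>q\<in>I \<times> I. fscale (Amat g q) (rr q))"
      using Amat_decomp[OF g, where abar=abar] unfolding I_def rr_def .
    show "Amat g \<in> cspanV S" by (subst eq) (rule fv.span_add[OF b s])
  qed
  have SW: "S \<subseteq> cspanV ?W"
  proof -
    have R: "rr q \<in> cspanV ?W" if "q \<in> I \<times> I" for q
      using that Rm_in_span unfolding rr_def I_def by (cases q) auto
    have g1: "Amat (cls (mat 1 :: 'a^3^3)) \<in> cspanV ?W"
      using id_in_PGL3(1) by (intro fv.span_base) blast
    have eq: "Amat (cls (mat 1 :: 'a^3^3)) = B0 abar + (\<Sum>q\<in>I \<times> I. fscale (Amat (cls (mat 1 :: 'a^3^3)) q) (rr q))"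
      using Amat_decomp[OF id_in_PGL3(1), where abar=abar] unfolding I_def rr_def .
    have eq2: "B0 abar = Amat (cls (mat 1 :: 'a^3^3)) - (\<Sum>q\<in>I \<times> I. fscale (Amat (cls (mat 1 :: 'a^3^3)) q) (rr q))"
      by (subst eq) simp
    have s: "(\<Sum>q\<in>I \<times> I. fscale (Amat (cls (mat 1 :: 'a^3^3)) q) (rr q)) \<in> cspanV ?W"
      by (intro fv.span_sum fv.span_scale R)
    have "B0 abar \<in> cspanV ?W" by (subst eq2) (rule fv.span_diff[OF g1 s])
    then show ?thesis unfolding S_def using R by auto
  qed
  have spaneq: "cspanV ?W = cspanV S"
    using fv.span_mono[OF WS] fv.span_mono[OF SW] by (simp add: fv.span_span)
  have finS: "finite S" unfolding S_def by simp
  obtain a0 where a0: "a0 \<noteq> abar" using other_point by blast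
  have B0nz: "B0 abar \<noteq> 0"
  proof
    assume "B0 abar = 0"
    then have "B0 abar (a0, abar) = 0" by simp
    then show False using a0 unfolding B0_def by simp
  qed
  have indep: "\<not> fv.dependent S"
  proof (rule indep_crit[OF finS _ B0nz])
    show "B0 abar \<in> S" unfolding S_def by simp
    fix v assume v: "v \<in> S" "v \<noteq> B0 abar"
    then obtain a b where ab: "a \<in> I" "b \<in> I" "v = rr (a,b)" unfolding S_def by auto
    show "\<exists>p. v p \<noteq> 0 \<and> (\<forall>w\<in>S. w \<noteq> v \<longrightarrow> w p = 0)"
    proof (intro exI conjI ballI impI)
      show "v (a,b) \<noteq> 0" using rr_pt[OF ab(1,2)] ab(3) by simp
      fix w assume w: "w \<in> S" "w \<noteq> v"
      show "w (a,b) = 0"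
      proof (cases "w = B0 abar")
        case True then show ?thesis using B0_pt[OF ab(1,2)] by simp
      next
        case False
        then obtain a' b' where "w = rr (a',b')" using w(1) unfolding S_def by auto
        moreover have "(a',b') \<noteq> (a,b)" using w(2) ab(3) calculation by auto
        ultimately show ?thesis using rr_pt0[OF ab(1,2)] by simp
      qed
    qed
  qed
  have inj: "inj_on rr (I \<times> I)"
  proof (rule inj_onI)
    fix q q' assume q: "q \<in> I \<times> I" "q' \<in> I \<times> I" and e: "rr q = rr q'"
    obtain a b where qa: "q = (a,b)" by (cases q)
    obtain a' b' where qa': "q' = (a',b')" by (cases q')
    show "q = q'"
    proof (rule ccontr)
      assume "q \<noteq> q'"
      then have "rr (a',b') (a,b) = 0" using rr_pt0 q qa qa' by auto
      moreover have "rr (a,b) (a,b) = 1" using rr_pt q qa by auto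
      ultimately show False using e qa qa' by simp
    qed
  qed
  have notin: "B0 abar \<notin> rr ` (I \<times> I)"
  proof
    assume "B0 abar \<in> rr ` (I \<times> I)"
    then obtain a b where ab: "a \<in> I" "b \<in> I" "B0 abar = rr (a,b)" by auto
    then show False using rr_pt[OF ab(1,2)] B0_pt[OF ab(1,2)] by simp
  qed
  have cardI: "card I = card (UNIV :: 'a ppoint set) - 1" unfolding I_def by (simp add: card_Diff_singleton)
  have cardS: "card S = (card (UNIV :: 'a ppoint set) - 1)^2 + 1"
    unfolding S_def using notin card_image[OF inj] cardI by (simp add: card_cartesian_product power2_eq_square)
  have "A_rank TYPE('a) = cdimV ?W" unfolding A_rank_def ..
  also have "\<dots> = cdimV (cspanV ?W)" by simp
  also have "\<dots> = cdimV S" unfolding spaneq by simp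
  also have "\<dots> = card S" using fv.dim_eq_card_independent[OF indep] .
  finally show ?thesis using cardS by simp
qed

theorem mainTheorem4:
  fixes abar :: "'a::{finite,field} ppoint"
  shows "A_rank TYPE('a) = (card (UNIV :: 'a ppoint set) - 1)^2 + 1
    \<and> A_kernel TYPE('a) =
        cspanV ((\<lambda>\<alpha>. e1 abar - e1 \<alpha>) ` UNIV \<union> (\<lambda>\<alpha>. e2 abar - e2 \<alpha>) ` UNIV)"
proof
  show "A_rank TYPE('a) = (card (UNIV :: 'a ppoint set) - 1)^2 + 1" by (rule main_rank)
  show "A_kernel TYPE('a) =
        cspanV ((\<lambda>\<alpha>. e1 abar - e1 \<alpha>) ` UNIV \<union> (\<lambda>\<alpha>. e2 abar - e2 \<alpha>) ` UNIV)"
  proof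
    show "A_kernel TYPE('a) \<subseteq> cspanV ((\<lambda>\<alpha>. e1 abar - e1 \<alpha>) ` UNIV \<union> (\<lambda>\<alpha>. e2 abar - e2 \<alpha>) ` UNIV)"
      using kernel_sub_span[where abar=abar] by blast
    show "cspanV ((\<lambda>\<alpha>. e1 abar - e1 \<alpha>) ` UNIV \<union> (\<lambda>\<alpha>. e2 abar - e2 \<alpha>) ` UNIV) \<subseteq> A_kernel TYPE('a)"
      by (rule span_sub_kernel)
  qed
qed

end
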